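(* Fix an integer $k\geq1$ and $V=\{0,\ldots,k\}$. If a Boolean function $\varphi$ on $V$ satisfies $\mathrm{eul}(\varphi)=0$, then $\varphi\simeq\bot$.
   Context: A valuation is a subset $\nu\subseteq V$; $\nu^{(l)}$ is $\nu$ with membership of $l$ flipped. A Boolean function on $V$ is a map $\varphi:2^V\to\{\text{false},\text{true}\}$; $\mathrm{sat}(\varphi)$ is its set of satisfying valuations; $\mathrm{eul}(\varphi)=\sum_{\nu\in\mathrm{sat}(\varphi)}(-1)^{|\nu|}$; $\bot$ is the constant-false function. Write $\varphi\xrightarrow{+(\nu,l)}\varphi'$ if $\nu,\nu^{(l)}\notin\mathrm{sat}(\varphi)$ and $\mathrm{sat}(\varphi')=\mathrm{sat}(\varphi)\cup\{\nu,\nu^{(l)}\}$, and $\varphi\xrightarrow{-(\nu,l)}\varphi'$ if $\varphi'\xrightarrow{+(\nu,l)}\varphi$. Write $\varphi\xrightarrow{\pm}\varphi'$ if one of these holds for some $\nu,l$; $\simeq$ is the reflexive-transitive closure of $\xrightarrow{\pm}$ (an equivalence relation). *)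

theory Defs
  imports Main
begin

text \<open>Valuations over V are subsets of V; a Boolean function on V is a predicate on
  valuations, only its values on subsets of V matter (via sat).\<close>

definition flip :: "'a set \<Rightarrow> 'a \<Rightarrow> 'a set" where
  "flip \<nu> l = (if l \<in> \<nu> then \<nu> - {l} else insert l \<nu>)"

definition sat :: "'a set \<Rightarrow> ('a set \<Rightarrow> bool) \<Rightarrow> 'a set set" where
  "sat V \<phi> = {\<nu>. \<nu> \<subseteq> V \<and> \<phi> \<nu>}"

definition eul :: "'a set \<Rightarrow> ('a set \<Rightarrow> bool) \<Rightarrow> int" where
  "eul V \<phi> = (\<Sum>\<nu>\<in>sat V \<phi>. (-1) ^ card \<nu>)"

definition bot_fun :: "'a set \<Rightarrow> bool" where
  "bot_fun = (\<lambda>_. False)"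

definition plus_step :: "'a set \<Rightarrow> ('a set \<Rightarrow> bool) \<Rightarrow> 'a set \<Rightarrow> 'a
    \<Rightarrow> ('a set \<Rightarrow> bool) \<Rightarrow> bool" where
  "plus_step V \<phi> \<nu> l \<phi>' \<longleftrightarrow> \<nu> \<subseteq> V \<and> l \<in> V \<and>
     \<nu> \<notin> sat V \<phi> \<and> flip \<nu> l \<notin> sat V \<phi> \<and>
     sat V \<phi>' = sat V \<phi> \<union> {\<nu>, flip \<nu> l}"

definition pm_step :: "'a set \<Rightarrow> ('a set \<Rightarrow> bool) \<Rightarrow> ('a set \<Rightarrow> bool) \<Rightarrow> bool" where
  "pm_step V \<phi> \<phi>' \<longleftrightarrow> (\<exists>\<nu> l. plus_step V \<phi> \<nu> l \<phi>' \<or> plus_step V \<phi>' \<nu> l \<phi>)"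

definition equiv_bf :: "'a set \<Rightarrow> ('a set \<Rightarrow> bool) \<Rightarrow> ('a set \<Rightarrow> bool) \<Rightarrow> bool" where
  "equiv_bf V = (pm_step V)\<^sup>*\<^sup>*"

end

theory Submission
  imports Defs
begin

definition sd :: "'a set \<Rightarrow> 'a set \<Rightarrow> 'a set" where
  "sd a b = (a - b) \<union> (b - a)"

lemma flip_eq: "flip a i = (a - {i}) \<union> ({i} - a)"
  unfolding flip_def by auto

lemma flip_sub: "a \<subseteq> V \<Longrightarrow> i \<in> V \<Longrightarrow> flip a i \<subseteq> V"
  unfolding flip_eq by auto

lemma flip_ne: "flip a i \<noteq> a"
  unfolding flip_eq by auto

lemma flip2_ne: "i1 \<noteq> i2 \<Longrightarrow> flip (flip a i1) i2 \<noteq> a"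
  unfolding flip_eq by auto

lemma sat_mem: "T \<subseteq> Pow V \<Longrightarrow> sat V (\<lambda>x. x \<in> T) = T"
  unfolding sat_def by auto

lemma sat_sub: "sat V \<phi> \<subseteq> Pow V"
  unfolding sat_def by auto

lemma sat_fin: "finite V \<Longrightarrow> finite (sat V \<phi>)"
  using sat_sub finite_Pow_iff finite_subset by metis

lemma pm_sym: "pm_step V \<phi> \<psi> \<Longrightarrow> pm_step V \<psi> \<phi>"
  unfolding pm_step_def by blast

lemma equiv_sym: "equiv_bf V \<phi> \<psi> \<Longrightarrow> equiv_bf V \<psi> \<phi>"
  unfolding equiv_bf_def
proof (induction rule: rtranclp_induct)
  case base
  then show ?case by simp
next
  case (step y z)
  then show ?case using pm_sym
    by (metis converse_rtranclp_into_rtranclp)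
qed

lemma equiv_trans: "equiv_bf V \<phi> \<chi> \<Longrightarrow> equiv_bf V \<chi> \<psi> \<Longrightarrow> equiv_bf V \<phi> \<psi>"
  unfolding equiv_bf_def by (rule rtranclp_trans)

lemma pm_equiv: "pm_step V \<phi> \<psi> \<Longrightarrow> equiv_bf V \<phi> \<psi>"
  unfolding equiv_bf_def by auto

lemma card_flip: "finite a \<Longrightarrow> card (flip a l) = (if l \<in> a then card a - 1 else card a + 1)"
  unfolding flip_def by (auto simp: card_insert_if)

lemma eul_plus:
  assumes "finite V" "plus_step V \<phi> \<nu> l \<phi>'"
  shows "eul V \<phi>' = eul V \<phi>"
proof -
  have nu: "\<nu> \<subseteq> V" "\<nu> \<notin> sat V \<phi>" "flip \<nu> l \<notin> sat V \<phi>"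
    and s: "sat V \<phi>' = sat V \<phi> \<union> {\<nu>, flip \<nu> l}"
    using assms(2) unfolding plus_step_def by auto
  have fn: "finite \<nu>" using nu(1) assms(1) finite_subset by blast
  have ne: "flip \<nu> l \<noteq> \<nu>" by (rule flip_ne)
  have "eul V \<phi>' = (\<Sum>x\<in>insert \<nu> (insert (flip \<nu> l) (sat V \<phi>)). (-1::int) ^ card x)"
    unfolding eul_def s by (simp add: insert_commute)
  also have "\<dots> = (-1) ^ card \<nu> + ((-1) ^ card (flip \<nu> l) + eul V \<phi>)"
    using nu ne sat_fin[OF assms(1)] unfolding eul_def by simp
  also have "(-1::int) ^ card \<nu> + (-1) ^ card (flip \<nu> l) = 0"
  proof (cases "l \<in> \<nu>")
    case True
    then have "card \<nu> \<ge> 1" using fn by (metis card_0_eq empty_iff less_one not_le)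
    then obtain m where "card \<nu> = Suc m" by (metis Suc_le_D One_nat_def)
    then show ?thesis using True card_flip[OF fn] by simp
  next
    case False
    then show ?thesis using card_flip[OF fn] by simp
  qed
  then have "(-1::int) ^ card \<nu> + ((-1) ^ card (flip \<nu> l) + eul V \<phi>) = eul V \<phi>" by simp
  finally show ?thesis .
qed

lemma eul_pm: "finite V \<Longrightarrow> pm_step V \<phi> \<psi> \<Longrightarrow> eul V \<phi> = eul V \<psi>"
  unfolding pm_step_def using eul_plus by metis

lemma eul_equiv: assumes "finite V" shows "equiv_bf V \<phi> \<psi> \<Longrightarrow> eul V \<phi> = eul V \<psi>"
  unfolding equiv_bf_def
proof (induction rule: rtranclp_induct)
  case base then show ?case by simp
next
  case (step y z) then show ?case using eul_pm assms by metis
qed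

lemma move:
  assumes u: "u \<in> sat V \<phi>" and i: "i1 \<in> V" "i2 \<in> V" "i1 \<noteq> i2"
    and w: "w = flip (flip u i1) i2" "w \<notin> sat V \<phi>"
  shows "equiv_bf V \<phi> (\<lambda>x. x \<in> insert w (sat V \<phi> - {u}))"
proof -
  define v where "v = flip u i1"
  define S where "S = sat V \<phi>"
  have uV: "u \<subseteq> V" using u unfolding sat_def by auto
  have vV: "v \<subseteq> V" unfolding v_def using uV i flip_sub by metis
  have wV: "w \<subseteq> V" unfolding w v_def using uV i flip_sub by metis
  have uw: "u \<noteq> w" using w(1) i(3) flip2_ne by metis
  have vw: "v \<noteq> w" unfolding w v_def using flip_ne by metis
  have uv: "u \<noteq> v" unfolding v_def using flip_ne by metis
  have SV: "S \<subseteq> Pow V" unfolding S_def using sat_sub by metis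
  define \<psi> where "\<psi> = (\<lambda>x. x \<in> insert w (S - {u}))"
  have sp: "sat V \<psi> = insert w (S - {u})" unfolding \<psi>_def
    by (rule sat_mem) (use SV wV in auto)
  show ?thesis
  proof (cases "v \<in> S")
    case False
    define \<chi> where "\<chi> = (\<lambda>x. x \<in> S \<union> {v, w})"
    have sc: "sat V \<chi> = S \<union> {v, w}" unfolding \<chi>_def
      by (rule sat_mem) (use SV wV vV in auto)
    have "plus_step V \<phi> v i2 \<chi>"
      unfolding plus_step_def using vV i False w sc
      by (auto simp: S_def v_def)
    then have 1: "pm_step V \<phi> \<chi>" unfolding pm_step_def by blast
    have "plus_step V \<psi> u i1 \<chi>"
      unfolding plus_step_def sp sc using uV i False uw uv vw u
      by (auto simp: S_def v_def[symmetric])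
    then have 2: "pm_step V \<chi> \<psi>" unfolding pm_step_def by blast
    show ?thesis using 1 2 pm_equiv equiv_trans unfolding \<psi>_def S_def by metis
  next
    case True
    define \<chi> where "\<chi> = (\<lambda>x. x \<in> S - {u, v})"
    have sc: "sat V \<chi> = S - {u, v}" unfolding \<chi>_def
      by (rule sat_mem) (use SV in auto)
    have "plus_step V \<chi> u i1 \<phi>"
      unfolding plus_step_def sc using uV i True u
      by (auto simp: S_def v_def[symmetric])
    then have 1: "pm_step V \<phi> \<chi>" unfolding pm_step_def by blast
    have "plus_step V \<chi> v i2 \<psi>"
      unfolding plus_step_def sp sc using vV i True uw uv vw u w
      by (auto simp: S_def v_def[symmetric])
    then have 2: "pm_step V \<chi> \<psi>" unfolding pm_step_def by blast
    show ?thesis using 1 2 pm_equiv equiv_trans unfolding \<psi>_def S_def by metis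
  qed
qed


lemma sd_flip2: "i1 \<in> sd a b \<Longrightarrow> i2 \<in> sd a b \<Longrightarrow> i1 \<noteq> i2 \<Longrightarrow>
   sd (flip (flip a i1) i2) b = sd a b - {i1, i2}"
  unfolding sd_def flip_eq by auto

lemma sd_single: "sd a b = {i} \<Longrightarrow> b = flip a i"
  unfolding sd_def flip_eq by blast

lemma sd_sub: "a \<subseteq> V \<Longrightarrow> b \<subseteq> V \<Longrightarrow> sd a b \<subseteq> V"
  unfolding sd_def by auto

lemma sd_empty: "sd a b = {} \<Longrightarrow> a = b"
  unfolding sd_def by blast

lemma pair_reduce:
  assumes fin: "finite V"
  shows "a \<in> sat V \<phi> \<Longrightarrow> b \<in> sat V \<phi> \<Longrightarrow> odd (card (sd a b)) \<Longrightarrow>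
    \<exists>\<psi>. equiv_bf V \<phi> \<psi> \<and> card (sat V \<psi>) + 2 = card (sat V \<phi>)"
proof (induction "card (sd a b)" arbitrary: \<phi> a b rule: less_induct)
  case less
  have aV: "a \<subseteq> V" and bV: "b \<subseteq> V" using less.prems unfolding sat_def by auto
  have sdV: "sd a b \<subseteq> V" using sd_sub aV bV by metis
  have fsd: "finite (sd a b)" using sdV fin finite_subset by metis
  have fS: "finite (sat V \<phi>)" using sat_fin fin by metis
  show ?case
  proof (cases "card (sd a b) = 1")
    case True
    then obtain i where i: "sd a b = {i}" using card_1_singletonE by metis
    have iV: "i \<in> V" using i sdV by auto
    have b: "b = flip a i" using sd_single i by metis
    have ab: "a \<noteq> b" using b flip_ne by metis
    define \<psi> where "\<psi> = (\<lambda>x. x \<in> sat V \<phi> - {a, b})"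
    have sp: "sat V \<psi> = sat V \<phi> - {a, b}" unfolding \<psi>_def
      by (rule sat_mem) (use sat_sub in blast)
    have "plus_step V \<psi> a i \<phi>"
      unfolding plus_step_def sp using aV iV less.prems b[symmetric] by auto
    then have "equiv_bf V \<phi> \<psi>" using pm_equiv unfolding pm_step_def by metis
    moreover have "card {a, b} \<le> card (sat V \<phi>)"
      using fS less.prems by (intro card_mono) auto
    moreover have "card (sat V \<psi>) + 2 = card (sat V \<phi>)"
      unfolding sp using fS less.prems ab calculation(2) by (simp add: card_Diff_subset)
    ultimately show ?thesis by blast
  next
    case False
    then have c2: "card (sd a b) \<ge> 2" using less.prems(3) by (cases "card (sd a b)") auto
    then have "sd a b \<noteq> {}" by (metis card.empty not_numeral_le_zero)
    then obtain i1 where i1: "i1 \<in> sd a b" by blast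
    have "card (sd a b - {i1}) \<ge> 1" using c2 i1 fsd by (simp add: card_Diff_singleton)
    then have "sd a b - {i1} \<noteq> {}" by (metis card.empty not_one_le_zero)
    then obtain i2 where "i2 \<in> sd a b - {i1}" by blast
    then have i: "i1 \<in> sd a b" "i2 \<in> sd a b" "i1 \<noteq> i2" using i1 by auto
    have iV: "i1 \<in> V" "i2 \<in> V" using i sdV by auto
    define w where "w = flip (flip a i1) i2"
    have wV: "w \<subseteq> V" unfolding w_def using aV iV flip_sub by metis
    have sdw: "sd w b = sd a b - {i1, i2}" unfolding w_def by (rule sd_flip2[OF i])
    have cw: "card (sd w b) + 2 = card (sd a b)" unfolding sdw using fsd i c2
      by (simp add: card_Diff_subset)
    have lt: "card (sd w b) < card (sd a b)" using cw by linarith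
    have "odd (card (sd w b) + 2)" using cw less.prems(3) by simp
    then have od: "odd (card (sd w b))" by simp
    show ?thesis
    proof (cases "w \<in> sat V \<phi>")
      case True
      then show ?thesis using less.hyps[OF lt True less.prems(2) od] by blast
    next
      case False
      define \<phi>' where "\<phi>' = (\<lambda>x. x \<in> insert w (sat V \<phi> - {a}))"
      have e1: "equiv_bf V \<phi> \<phi>'" unfolding \<phi>'_def
        using move[OF less.prems(1) iV i(3) w_def False] .
      have "insert w (sat V \<phi> - {a}) \<subseteq> Pow V" using sat_sub[of V \<phi>] wV by blast
      then have sp: "sat V \<phi>' = insert w (sat V \<phi> - {a})" unfolding \<phi>'_def
        by (rule sat_mem)
      have ab: "a \<noteq> b" using i unfolding sd_def by auto
      have cp: "card (sat V \<phi>') = card (sat V \<phi>)"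
      proof -
        have "w \<notin> sat V \<phi> - {a}" using False by blast
        then have "card (insert w (sat V \<phi> - {a})) = Suc (card (sat V \<phi> - {a}))"
          using fS by simp
        moreover have "card (sat V \<phi>) > 0" using fS less.prems(1) card_gt_0_iff by blast
        ultimately show ?thesis unfolding sp using less.prems(1) fS by (simp add: card_Diff_singleton)
      qed
      have wi: "w \<in> sat V \<phi>'" "b \<in> sat V \<phi>'" using sp less.prems(2) ab by auto
      obtain \<psi> where "equiv_bf V \<phi>' \<psi>" "card (sat V \<psi>) + 2 = card (sat V \<phi>')"
        using less.hyps[OF lt wi od] by blast
      then show ?thesis using e1 cp equiv_trans by metis
    qed
  qed
qed


lemma card_sd: assumes f: "finite a" "finite b"
  shows "card (sd a b) + 2 * card (a \<inter> b) = card a + card b"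
proof -
  have "card (sd a b) = card (a - b) + card (b - a)"
    unfolding sd_def using f by (intro card_Un_disjoint) auto
  moreover have "card (a - b) = card a - card (a \<inter> b)"
    using f by (simp add: card_Diff_subset_Int)
  moreover have "card (b - a) = card b - card (a \<inter> b)"
    using f by (simp add: card_Diff_subset_Int Int_commute)
  moreover have "card (a \<inter> b) \<le> card a" "card (a \<inter> b) \<le> card b"
    using f by (auto intro: card_mono)
  ultimately show ?thesis by linarith
qed

lemma odd_pair:
  assumes fin: "finite V" and e: "eul V \<phi> = 0" and ne: "sat V \<phi> \<noteq> {}"
  shows "\<exists>a\<in>sat V \<phi>. \<exists>b\<in>sat V \<phi>. odd (card (sd a b))"
proof (rule ccontr)
  assume "\<not> ?thesis"
  then have ev: "\<And>a b. a \<in> sat V \<phi> \<Longrightarrow> b \<in> sat V \<phi> \<Longrightarrow> even (card (sd a b))" by blast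
  obtain a0 where a0: "a0 \<in> sat V \<phi>" using ne by blast
  have fS: "finite (sat V \<phi>)" using sat_fin fin by metis
  have "\<And>x. x \<in> sat V \<phi> \<Longrightarrow> (-1::int) ^ card x = (-1) ^ card a0"
  proof -
    fix x assume x: "x \<in> sat V \<phi>"
    have fx: "finite x" "finite a0" using x a0 fin unfolding sat_def by (auto intro: finite_subset)
    have "even (card x + card a0)" using card_sd[OF fx] ev[OF x a0]
      by (metis even_add even_mult_iff even_numeral)
    then show "(-1::int) ^ card x = (-1) ^ card a0"
      by (metis even_add neg_one_even_power neg_one_odd_power)
  qed
  then have "eul V \<phi> = (\<Sum>x\<in>sat V \<phi>. (-1::int) ^ card a0)"
    unfolding eul_def by (rule sum.cong[OF refl])
  also have "\<dots> = of_nat (card (sat V \<phi>)) * (-1) ^ card a0" by simp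
  finally have "of_nat (card (sat V \<phi>)) * (-1::int) ^ card a0 = 0" using e by simp
  moreover have "card (sat V \<phi>) > 0" using fS ne card_gt_0_iff by blast
  ultimately show False by simp
qed

lemma empty_equiv:
  assumes l: "l \<in> V" and s: "sat V \<phi> = {}"
  shows "equiv_bf V \<phi> bot_fun"
proof -
  define \<chi> where "\<chi> = (\<lambda>x. x \<in> {{}, {l}})"
  have sc: "sat V \<chi> = {{}, {l}}" unfolding \<chi>_def by (rule sat_mem) (use l in auto)
  have fl: "flip {} l = {l}" unfolding flip_def by simp
  have sb: "sat V bot_fun = {}" unfolding sat_def bot_fun_def by simp
  have "plus_step V \<phi> {} l \<chi>" unfolding plus_step_def using l s sc fl by auto
  moreover have "plus_step V bot_fun {} l \<chi>" unfolding plus_step_def using l sb sc fl by auto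
  ultimately have "pm_step V \<phi> \<chi>" "pm_step V \<chi> bot_fun" unfolding pm_step_def by blast+
  then show ?thesis using pm_equiv equiv_trans by metis
qed

lemma main:
  assumes fin: "finite V" and l: "l \<in> V"
  shows "eul V \<phi> = 0 \<Longrightarrow> equiv_bf V \<phi> bot_fun"
proof (induction "card (sat V \<phi>)" arbitrary: \<phi> rule: less_induct)
  case less
  show ?case
  proof (cases "sat V \<phi> = {}")
    case True
    then show ?thesis using empty_equiv l by metis
  next
    case False
    then obtain a b where ab: "a \<in> sat V \<phi>" "b \<in> sat V \<phi>" "odd (card (sd a b))"
      using odd_pair[OF fin less.prems] by blast
    then obtain \<psi> where p: "equiv_bf V \<phi> \<psi>" "card (sat V \<psi>) + 2 = card (sat V \<phi>)"
      using pair_reduce[OF fin] by blast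
    have "eul V \<psi> = 0" using eul_equiv[OF fin p(1)] less.prems by simp
    moreover have "card (sat V \<psi>) < card (sat V \<phi>)" using p(2) by linarith
    ultimately have "equiv_bf V \<psi> bot_fun" using less.hyps by blast
    then show ?thesis using p(1) equiv_trans by metis
  qed
qed

theorem proposition5p9:
  fixes k :: nat and \<phi> :: "nat set \<Rightarrow> bool"
  assumes "k \<ge> 1"
    and "eul {0..k} \<phi> = 0"
  shows "equiv_bf {0..k} \<phi> bot_fun"
  using main[of "{0..k}" 0 \<phi>] assms(2) by simp

end
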